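(* Fix $\alpha\in(0,\tfrac12)$ and run Algorithm 2 (described in the context) with parameter $\alpha$ on any instance of dynamic bin packing with $n$ items. Then the algorithm makes at most $\frac{4\alpha}{1-2\alpha}\cdot n$ migrations.
   Context: Dynamic bin packing: bins have capacity $1$; items arrive online at times $a_i\ge0$ with size $s_i\in[0,1]$ and (unknown at arrival) duration $d_i>0$, and depart at $a_i+d_i$. The load of a bin is the total size of its items; a bin is open while nonempty. A migration is a move of one already placed item to a different bin. FirstFit with a given ordering of bins places an item into the first bin in the order with enough remaining capacity, or opens a new bin. Algorithm 1 (parameters $\alpha, f$): each bin is labeled Bad or Good. When an item $i$ of size $s_i$ arrives: if there is a Bad bin with load $\le 1-s_i$, put $i$ there, and if its load becomes $\ge f$ relabel it Good; otherwise, if there is a Good bin with load $\le1-s_i$, put $i$ into any such bin; otherwise open a new bin for $i$, labeled Bad if its load is $<f$ and Good otherwise. When an item departs: if its bin was Good and now has load $<\alpha$, migrate all items remaining in that bin using FirstFit with bins ordered Bad bins, then Good bins, then new bins. Algorithm 2 (parameter $\alpha$): an item has class $c\in\{0,1,2,\dots\}$ if its size lies in $(2^{-(c+1)},2^{-c}]$. Initialize a guess $\tilde\rho=1$, an instance of Algorithm 1 for class $0$ with parameters $(\alpha,\tfrac12)$, and one junk bin. For each arriving item: if the current number of items in the system is $\ge\tilde\rho$, double $\tilde\rho$, initialize a new instance of Algorithm 1 for class $c=\log_2\tilde\rho$ with parameters $(\alpha,1-2^{-c})$, and open a new junk bin for this guess. Then, if the item's class $c$ satisfies $c<\log_2\tilde\rho$,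 assign it using the Algorithm 1 instance for class $c$ (each instance uses its own bins); otherwise assign it to the junk bin of the current guess $\tilde\rho$. *)

theory Defs
  imports Complex_Main
begin

(* Items are the natural numbers 0..<n.  Bins are identified by natural numbers. *)

datatype label = Bad | Good

(* Bookkeeping of a bin id: never opened, a junk bin, or a bin of the
   Algorithm 1 instance for class c with its current label. *)
datatype binfo = Unused | Junk | Inst nat label

datatype event = Arr nat | Dep nat

(* kk: log2 of the guess rho~ ; loc: bin of each item currently in the system;
   bins: bookkeeping of bin ids; junkb: junk bin of the current guess;
   migs: number of migrations performed so far *)
record state =
  kk :: nat
  loc :: "nat \<Rightarrow> nat option"
  bins :: "nat \<Rightarrow> binfo"
  junkb :: nat
  migs :: nat

definition load :: "(nat \<Rightarrow> real) \<Rightarrow> nat \<Rightarrow> (nat \<Rightarrow> nat option) \<Rightarrow> nat \<Rightarrow> real" where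
  "load s n L b = (\<Sum>j | j < n \<and> L j = Some b. s j)"

definition isopen :: "nat \<Rightarrow> (nat \<Rightarrow> nat option) \<Rightarrow> nat \<Rightarrow> bool" where
  "isopen n L b \<longleftrightarrow> (\<exists>j<n. L j = Some b)"

definition fpar :: "nat \<Rightarrow> real" where
  "fpar c = (if c = 0 then 1/2 else 1 - 1/2^c)"

definition item_class :: "real \<Rightarrow> nat \<Rightarrow> bool" where
  "item_class x c \<longleftrightarrow> 1/2^(Suc c) < x \<and> x \<le> 1/2^c"

(* Algorithm 1 (instance for class c, threshold f): placement of an arriving item i *)
inductive alg1_arrive ::
  "real \<Rightarrow> nat \<Rightarrow> (nat \<Rightarrow> real) \<Rightarrow> nat \<Rightarrow> (nat \<Rightarrow> binfo) \<Rightarrow> (nat \<Rightarrow> nat option) \<Rightarrow> nat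
   \<Rightarrow> (nat \<Rightarrow> binfo) \<Rightarrow> (nat \<Rightarrow> nat option) \<Rightarrow> bool"
  for f c s n where
  to_bad: "B b = Inst c Bad \<Longrightarrow> isopen n L b \<Longrightarrow> load s n L b \<le> 1 - s i \<Longrightarrow>
    alg1_arrive f c s n B L i
      (B(b := Inst c (if f \<le> load s n (L(i := Some b)) b then Good else Bad))) (L(i := Some b))"
| to_good: "\<not> (\<exists>b'. B b' = Inst c Bad \<and> isopen n L b' \<and> load s n L b' \<le> 1 - s i) \<Longrightarrow>
    B b = Inst c Good \<Longrightarrow> isopen n L b \<Longrightarrow> load s n L b \<le> 1 - s i \<Longrightarrow>
    alg1_arrive f c s n B L i B (L(i := Some b))"
| to_new: "\<not> (\<exists>b'. B b' = Inst c Bad \<and> isopen n L b' \<and> load s n L b' \<le> 1 - s i) \<Longrightarrow>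
    \<not> (\<exists>b'. B b' = Inst c Good \<and> isopen n L b' \<and> load s n L b' \<le> 1 - s i) \<Longrightarrow>
    B b = Unused \<Longrightarrow>
    alg1_arrive f c s n B L i (B(b := Inst c (if f \<le> s i then Good else Bad))) (L(i := Some b))"

(* FirstFit migration of the items js (in this order) w.r.t. the bin order ord;
   newly opened bins are appended to the order.  Labels are maintained as on arrival. *)
inductive firstfit ::
  "real \<Rightarrow> nat \<Rightarrow> (nat \<Rightarrow> real) \<Rightarrow> nat \<Rightarrow> nat list \<Rightarrow> nat list \<Rightarrow> (nat \<Rightarrow> binfo) \<Rightarrow> (nat \<Rightarrow> nat option)
   \<Rightarrow> (nat \<Rightarrow> binfo) \<Rightarrow> (nat \<Rightarrow> nat option) \<Rightarrow> bool"
  for f c s n where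
  ff_done: "firstfit f c s n ord [] B L B L"
| ff_fit: "ord = pre @ b # post \<Longrightarrow> (\<forall>b'\<in>set pre. \<not> load s n L b' \<le> 1 - s j) \<Longrightarrow>
    load s n L b \<le> 1 - s j \<Longrightarrow> L' = L(j := Some b) \<Longrightarrow>
    B' = B(b := (if B b = Inst c Bad \<and> f \<le> load s n L' b then Inst c Good else B b)) \<Longrightarrow>
    firstfit f c s n ord js B' L' B'' L'' \<Longrightarrow>
    firstfit f c s n ord (j # js) B L B'' L''"
| ff_new: "(\<forall>b'\<in>set ord. \<not> load s n L b' \<le> 1 - s j) \<Longrightarrow> B b = Unused \<Longrightarrow>
    L' = L(j := Some b) \<Longrightarrow> B' = B(b := Inst c (if f \<le> s j then Good else Bad)) \<Longrightarrow>
    firstfit f c s n (ord @ [b]) js B' L' B'' L'' \<Longrightarrow>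
    firstfit f c s n ord (j # js) B L B'' L''"

(* Algorithm 1 (parameters alpha, f, instance for class c): departure of item i;
   the last argument is the number of migrations performed *)
inductive alg1_depart ::
  "real \<Rightarrow> real \<Rightarrow> nat \<Rightarrow> (nat \<Rightarrow> real) \<Rightarrow> nat \<Rightarrow> (nat \<Rightarrow> binfo) \<Rightarrow> (nat \<Rightarrow> nat option) \<Rightarrow> nat
   \<Rightarrow> (nat \<Rightarrow> binfo) \<Rightarrow> (nat \<Rightarrow> nat option) \<Rightarrow> nat \<Rightarrow> bool"
  for \<alpha> f c s n where
  dep_plain: "L i = Some b \<Longrightarrow> \<not> (B b = Inst c Good \<and> load s n (L(i := None)) b < \<alpha>) \<Longrightarrow>
    alg1_depart \<alpha> f c s n B L i B (L(i := None)) 0"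
| dep_migrate: "L i = Some b \<Longrightarrow> L1 = L(i := None) \<Longrightarrow>
    B b = Inst c Good \<Longrightarrow> load s n L1 b < \<alpha> \<Longrightarrow>
    distinct (bads @ goods) \<Longrightarrow>
    set bads = {b'. b' \<noteq> b \<and> isopen n L1 b' \<and> B b' = Inst c Bad} \<Longrightarrow>
    set goods = {b'. b' \<noteq> b \<and> isopen n L1 b' \<and> B b' = Inst c Good} \<Longrightarrow>
    distinct js \<Longrightarrow> set js = {j. j < n \<and> L1 j = Some b} \<Longrightarrow>
    firstfit f c s n (bads @ goods) js B L1 B' L' \<Longrightarrow>
    alg1_depart \<alpha> f c s n B L i B' L' (length js)"

(* update of the guess rho~ = 2^kk before an arrival *)
inductive guess_upd :: "nat \<Rightarrow> state \<Rightarrow> state \<Rightarrow> bool" for n where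
  keep: "card {j. j < n \<and> loc \<sigma> j \<noteq> None} < 2 ^ kk \<sigma> \<Longrightarrow> guess_upd n \<sigma> \<sigma>"
| double: "card {j. j < n \<and> loc \<sigma> j \<noteq> None} \<ge> 2 ^ kk \<sigma> \<Longrightarrow> bins \<sigma> jb = Unused \<Longrightarrow>
    guess_upd n \<sigma> (\<sigma>\<lparr>kk := Suc (kk \<sigma>), bins := (bins \<sigma>)(jb := Junk), junkb := jb\<rparr>)"

inductive alg2_step :: "real \<Rightarrow> (nat \<Rightarrow> real) \<Rightarrow> nat \<Rightarrow> state \<Rightarrow> event \<Rightarrow> state \<Rightarrow> bool"
  for \<alpha> s n where
  arr_inst: "i < n \<Longrightarrow> loc \<sigma> i = None \<Longrightarrow> guess_upd n \<sigma> \<sigma>1 \<Longrightarrow>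
    item_class (s i) c \<Longrightarrow> c < kk \<sigma>1 \<Longrightarrow>
    alg1_arrive (fpar c) c s n (bins \<sigma>1) (loc \<sigma>1) i B' L' \<Longrightarrow>
    alg2_step \<alpha> s n \<sigma> (Arr i) (\<sigma>1\<lparr>bins := B', loc := L'\<rparr>)"
| arr_junk: "i < n \<Longrightarrow> loc \<sigma> i = None \<Longrightarrow> guess_upd n \<sigma> \<sigma>1 \<Longrightarrow>
    \<not> (\<exists>c. item_class (s i) c \<and> c < kk \<sigma>1) \<Longrightarrow>
    alg2_step \<alpha> s n \<sigma> (Arr i) (\<sigma>1\<lparr>loc := (loc \<sigma>1)(i := Some (junkb \<sigma>1))\<rparr>)"
| dep_inst: "loc \<sigma> i = Some b \<Longrightarrow> bins \<sigma> b = Inst c l \<Longrightarrow>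
    alg1_depart \<alpha> (fpar c) c s n (bins \<sigma>) (loc \<sigma>) i B' L' m \<Longrightarrow>
    alg2_step \<alpha> s n \<sigma> (Dep i) (\<sigma>\<lparr>bins := B', loc := L', migs := migs \<sigma> + m\<rparr>)"
| dep_junk: "loc \<sigma> i = Some b \<Longrightarrow> bins \<sigma> b = Junk \<Longrightarrow>
    alg2_step \<alpha> s n \<sigma> (Dep i) (\<sigma>\<lparr>loc := (loc \<sigma>)(i := None)\<rparr>)"

inductive alg2_run :: "real \<Rightarrow> (nat \<Rightarrow> real) \<Rightarrow> nat \<Rightarrow> state \<Rightarrow> event list \<Rightarrow> state \<Rightarrow> bool"
  for \<alpha> s n where
  run_nil: "alg2_run \<alpha> s n \<sigma> [] \<sigma>"
| run_cons: "alg2_step \<alpha> s n \<sigma> e \<sigma>1 \<Longrightarrow> alg2_run \<alpha> s n \<sigma>1 es \<sigma>2 \<Longrightarrow> alg2_run \<alpha> s n \<sigma> (e # es) \<sigma>2"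

definition alg2_init :: state where
  "alg2_init = \<lparr>kk = 0, loc = (\<lambda>_. None), bins = (\<lambda>_. Unused)(0 := Junk), junkb = 0, migs = 0\<rparr>"

definition ev_time :: "(nat \<Rightarrow> real) \<Rightarrow> (nat \<Rightarrow> real) \<Rightarrow> event \<Rightarrow> real" where
  "ev_time a d e = (case e of Arr i \<Rightarrow> a i | Dep i \<Rightarrow> a i + d i)"

(* the event sequence of the instance: every arrival and departure exactly once, in
   chronological order (simultaneous events in arbitrary order) *)
definition valid_order :: "nat \<Rightarrow> (nat \<Rightarrow> real) \<Rightarrow> (nat \<Rightarrow> real) \<Rightarrow> event list \<Rightarrow> bool" where
  "valid_order n a d evs \<longleftrightarrow> distinct evs \<and> set evs = Arr ` {..<n} \<union> Dep ` {..<n}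
     \<and> sorted (map (ev_time a d) evs)"

end

theory Submission
  imports Defs
begin


definition pot :: "(nat \<Rightarrow> real) \<Rightarrow> nat \<Rightarrow> (nat \<Rightarrow> binfo) \<Rightarrow> (nat \<Rightarrow> nat option) \<Rightarrow> nat \<Rightarrow> real" where
  "pot s n B L x = (if isopen n L x then (case B x of Inst c l \<Rightarrow>
      (if l = Good then max 0 (2^c * (fpar c - load s n L x)) else 0) | _ \<Rightarrow> 0) else 0)"

definition Phi :: "(nat \<Rightarrow> real) \<Rightarrow> nat \<Rightarrow> (nat \<Rightarrow> binfo) \<Rightarrow> (nat \<Rightarrow> nat option) \<Rightarrow> real" where
  "Phi s n B L = (\<Sum>x\<in>{x. isopen n L x}. pot s n B L x)"

definition binv :: "(nat \<Rightarrow> real) \<Rightarrow> nat \<Rightarrow> (nat \<Rightarrow> binfo) \<Rightarrow> (nat \<Rightarrow> nat option) \<Rightarrow> bool" where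
  "binv s n B L \<longleftrightarrow> (\<forall>j x. L j = Some x \<longrightarrow> j < n \<and> B x \<noteq> Unused \<and>
      (\<forall>c l. B x = Inst c l \<longrightarrow> item_class (s j) c))"

lemma pot_nonneg: "0 \<le> pot s n B L x"
  by (auto simp: pot_def split: binfo.split)

lemma pot_Good: "B x = Inst c Good \<Longrightarrow>
  pot s n B L x = (if isopen n L x then max 0 (2^c * (fpar c - load s n L x)) else 0)"
  by (simp add: pot_def)

lemma pot_Bad: "B x = Inst c Bad \<Longrightarrow> pot s n B L x = 0"
  by (simp add: pot_def)

lemma pot_Junk: "B x = Junk \<Longrightarrow> pot s n B L x = 0"
  by (simp add: pot_def)

lemma pot_Unused: "B x = Unused \<Longrightarrow> pot s n B L x = 0"
  by (simp add: pot_def)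

lemma pot_closed: "\<not> isopen n L x \<Longrightarrow> pot s n B L x = 0"
  by (simp add: pot_def)

lemma pot_cong: "B' x = B x \<Longrightarrow> isopen n L' x = isopen n L x \<Longrightarrow> load s n L' x = load s n L x \<Longrightarrow>
  pot s n B' L' x = pot s n B L x"
  by (simp add: pot_def split: binfo.split)

lemma fin_open: "finite {x. isopen n L x}"
proof -
  have "{x. isopen n L x} \<subseteq> (\<lambda>j. the (L j)) ` {..<n}"
    by (auto simp: isopen_def image_iff) (metis option.sel lessThan_iff)
  then show ?thesis by (rule finite_subset) simp
qed

lemma Phi_alt: "finite W \<Longrightarrow> {x. isopen n L x} \<subseteq> W \<Longrightarrow> Phi s n B L = (\<Sum>x\<in>W. pot s n B L x)"
  unfolding Phi_def by (rule sum.mono_neutral_left) (auto simp: pot_closed)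

lemma Phi_nonneg: "0 \<le> Phi s n B L"
  unfolding Phi_def by (rule sum_nonneg) (simp add: pot_nonneg)

lemma phi_cmp:
  assumes "\<forall>x. x \<noteq> b \<longrightarrow> pot s n B' L' x \<le> pot s n B L x"
  shows "Phi s n B' L' - pot s n B' L' b \<le> Phi s n B L - pot s n B L b"
proof -
  define W where "W = {x. isopen n L x} \<union> {x. isopen n L' x} \<union> {b}"
  have fW: "finite W" unfolding W_def using fin_open by auto
  have bW: "b \<in> W" unfolding W_def by auto
  have "Phi s n B' L' = (\<Sum>x\<in>W. pot s n B' L' x)"
    by (rule Phi_alt[OF fW]) (auto simp: W_def)
  also have "\<dots> = pot s n B' L' b + (\<Sum>x\<in>W-{b}. pot s n B' L' x)"
    by (rule sum.remove[OF fW bW])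
  finally have 1: "Phi s n B' L' = pot s n B' L' b + (\<Sum>x\<in>W-{b}. pot s n B' L' x)" .
  have "Phi s n B L = (\<Sum>x\<in>W. pot s n B L x)"
    by (rule Phi_alt[OF fW]) (auto simp: W_def)
  also have "\<dots> = pot s n B L b + (\<Sum>x\<in>W-{b}. pot s n B L x)"
    by (rule sum.remove[OF fW bW])
  finally have 2: "Phi s n B L = pot s n B L b + (\<Sum>x\<in>W-{b}. pot s n B L x)" .
  note 1 2
  moreover have "(\<Sum>x\<in>W-{b}. pot s n B' L' x) \<le> (\<Sum>x\<in>W-{b}. pot s n B L x)"
    by (rule sum_mono) (use assms in auto)
  ultimately show ?thesis by linarith
qed

lemma load_split:
  assumes "j < n"
  shows "load s n L x = (\<Sum>k\<in>{k. k < n \<and> k \<noteq> j \<and> L k = Some x}. s k) + (if L j = Some x then s j else 0)"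
proof (cases "L j = Some x")
  case True
  have "{k. k < n \<and> L k = Some x} = insert j {k. k < n \<and> k \<noteq> j \<and> L k = Some x}"
    using True assms by auto
  then show ?thesis using True by (simp add: load_def)
next
  case False
  have "{k. k < n \<and> L k = Some x} = {k. k < n \<and> k \<noteq> j \<and> L k = Some x}"
    using False by auto
  then show ?thesis using False by (simp add: load_def)
qed

lemma load_upd:
  assumes "j < n"
  shows "load s n (L(j := v)) x = load s n L x - (if L j = Some x then s j else 0) + (if v = Some x then s j else 0)"
proof -
  have e: "{k. k < n \<and> k \<noteq> j \<and> (L(j := v)) k = Some x} = {k. k < n \<and> k \<noteq> j \<and> L k = Some x}"
    by auto
  show ?thesis using load_split[OF assms, of s L x] load_split[OF assms, of s "L(j:=v)" x] e by simp
qed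

lemma isopen_upd:
  assumes "j < n"
  shows "isopen n (L(j := v)) x \<longleftrightarrow> (\<exists>k<n. k \<noteq> j \<and> L k = Some x) \<or> v = Some x"
  using assms unfolding isopen_def by auto

lemma upd_other:
  assumes "j < n" "L j \<noteq> Some x" "v \<noteq> Some x"
  shows "load s n (L(j := v)) x = load s n L x" "isopen n (L(j := v)) x = isopen n L x"
  using assms load_upd[OF assms(1)] isopen_upd[OF assms(1)] unfolding isopen_def by auto

lemma load_closed: "\<not> isopen n L x \<Longrightarrow> load s n L x = 0"
proof -
  assume "\<not> isopen n L x"
  then have "{j. j < n \<and> L j = Some x} = {}" unfolding isopen_def by auto
  then show ?thesis unfolding load_def by (simp only: sum.empty)
qed

lemma class_facts: "item_class x c \<Longrightarrow> 0 < x \<and> x \<le> 1/2^c \<and> 1/2^(Suc c) < x"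
  unfolding item_class_def by (auto intro: less_trans[rotated])

lemma fpar_ge: "1/2 \<le> fpar c"
proof (cases "c = 0")
  case False
  then have "(2::real)^1 \<le> 2^c" by (intro power_increasing) auto
  then have "(2::real) \<le> 2^c" by simp
  then have "1/2^c \<le> (1/2::real)" by (simp add: field_simps)
  then show ?thesis using False by (simp add: fpar_def)
qed (simp add: fpar_def)

lemma pot_add_Good:
  assumes "B x = Inst c Good" "isopen n L x" "load s n L' x = load s n L x + y" "0 \<le> y"
  shows "pot s n B L' x \<le> pot s n B L x"
proof -
  have "(2::real)^c * (fpar c - load s n L' x) \<le> 2^c * (fpar c - load s n L x)"
    using assms(3,4) by (intro mult_left_mono) auto
  then have "max 0 ((2::real)^c * (fpar c - load s n L' x)) \<le> max 0 (2^c * (fpar c - load s n L x))"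
    by (rule max.mono[rotated]) simp
  then show ?thesis using assms(1,2) by (auto simp: pot_Good)
qed

lemma pot_full: "B x = Inst c Good \<Longrightarrow> fpar c \<le> load s n L x \<Longrightarrow> pot s n B L x = 0"
proof -
  assume a: "B x = Inst c Good" "fpar c \<le> load s n L x"
  have "(2::real)^c * (fpar c - load s n L x) \<le> 0" by (rule mult_nonneg_nonpos) (use a in simp_all)
  then show ?thesis using a by (simp add: pot_Good)
qed
thm firstfit.induct


lemma ff_lemma:
  assumes "firstfit f c s n ord js B L B2 L2" "f = fpar c"
    "b \<notin> set ord" "\<exists>l. B b = Inst c l" "distinct js" "\<forall>j\<in>set js. L j = Some b"
    "\<forall>x\<in>set ord. isopen n L x \<and> (\<exists>l. B x = Inst c l)" "binv s n B L"
  shows "(\<forall>x. x \<noteq> b \<longrightarrow> pot s n B2 L2 x \<le> pot s n B L x) \<and> binv s n B2 L2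
    \<and> (\<forall>j. j \<notin> set js \<longrightarrow> L2 j = L j) \<and> (\<forall>j\<in>set js. L2 j \<noteq> Some b)
    \<and> (\<forall>x. B x = Junk \<longrightarrow> B2 x = Junk) \<and> B2 b = B b"
  using assms
proof (induction rule: firstfit.induct)
  case (ff_done ord B L)
  then show ?case by auto
next
  case (ff_fit ord pre b2 post L j L' B' B js B'' L'')
  have jn: "j < n" and Ljb: "L j = Some b" using ff_fit.prems ff_fit.hyps unfolding binv_def by auto
  have b2o: "b2 \<in> set ord" using ff_fit.hyps(1) by auto
  then have b2b: "b2 \<noteq> b" using ff_fit.prems by auto
  obtain l2 where Bb2: "B b2 = Inst c l2" and ob2: "isopen n L b2" using b2o ff_fit.prems by auto
  obtain lb where Bb: "B b = Inst c lb" using ff_fit.prems by auto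
  have cj: "item_class (s j) c" using ff_fit.prems(7) Ljb Bb unfolding binv_def by auto
  have sj: "0 \<le> s j" using class_facts[OF cj] by simp
  have jnot: "j \<notin> set js" using ff_fit.prems(4) by simp
  have B'b2: "\<exists>l. B' b2 = Inst c l" using Bb2 ff_fit.hyps(5) by auto
  have B'o: "\<And>x. x \<noteq> b2 \<Longrightarrow> B' x = B x" using ff_fit.hyps(5) by auto
  have L'o: "\<And>k. k \<noteq> j \<Longrightarrow> L' k = L k" using ff_fit.hyps(4) by auto
  have binv': "binv s n B' L'"
    unfolding binv_def
  proof (intro allI impI)
    fix k x assume a: "L' k = Some x"
    show "k < n \<and> B' x \<noteq> Unused \<and> (\<forall>c' l. B' x = Inst c' l \<longrightarrow> item_class (s k) c')"
    proof (cases "k = j")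
      case True
      then have "x = b2" using a ff_fit.hyps(4) by simp
      then show ?thesis using True jn B'b2 cj by auto
    next
      case False
      then have Lk: "L k = Some x" using a L'o by simp
      show ?thesis
      proof (cases "x = b2")
        case True
        then show ?thesis using Lk ff_fit.prems(7) Bb2 B'b2 unfolding binv_def by fastforce
      next
        case False
        then show ?thesis using Lk ff_fit.prems(7) B'o unfolding binv_def by auto
      qed
    qed
  qed
  have IH: "(\<forall>x. x \<noteq> b \<longrightarrow> pot s n B'' L'' x \<le> pot s n B' L' x) \<and> binv s n B'' L''
    \<and> (\<forall>j. j \<notin> set js \<longrightarrow> L'' j = L' j) \<and> (\<forall>j\<in>set js. L'' j \<noteq> Some b)
    \<and> (\<forall>x. B' x = Junk \<longrightarrow> B'' x = Junk) \<and> B'' b = B' b"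
  proof (rule ff_fit.IH)
    show "f = fpar c" by fact
    show "b \<notin> set ord" by fact
    show "\<exists>l. B' b = Inst c l" using Bb B'o[OF b2b[symmetric]] by auto
    show "distinct js" using ff_fit.prems by simp
    show "\<forall>j\<in>set js. L' j = Some b"
    proof
      fix j' assume jj: "j' \<in> set js"
      then have "j' \<noteq> j" using jnot by auto
      then show "L' j' = Some b" using L'o ff_fit.prems(5) jj by simp
    qed
    show "binv s n B' L'" by fact
    show "\<forall>x\<in>set ord. isopen n L' x \<and> (\<exists>l. B' x = Inst c l)"
    proof
      fix x assume xo: "x \<in> set ord"
      then have xb: "x \<noteq> b" using ff_fit.prems by auto
      have "isopen n L' x" using upd_other(2)[OF jn, of L x "Some b2"] xo ff_fit.prems(6) Ljb xb
        ff_fit.hyps(4) isopen_upd[OF jn] by (cases "x = b2") auto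
      moreover have "\<exists>l. B' x = Inst c l" using xo ff_fit.prems(6) B'o B'b2 by (cases "x = b2") auto
      ultimately show "isopen n L' x \<and> (\<exists>l. B' x = Inst c l)" by simp
    qed
  qed
  have step: "pot s n B' L' x \<le> pot s n B L x" if xb: "x \<noteq> b" for x
  proof (cases "x = b2")
    case True
    have ld: "load s n L' b2 = load s n L b2 + s j"
      using load_upd[OF jn, of s L "Some b2" b2] Ljb b2b ff_fit.hyps(4) by simp
    show ?thesis
    proof (cases l2)
      case Good
      then have "B' b2 = Inst c Good" using Bb2 ff_fit.hyps(5) by simp
      then have "pot s n B' L' b2 = pot s n B L' b2" using Bb2 Good by (simp add: pot_def)
      also have "\<dots> \<le> pot s n B L b2" using pot_add_Good[OF _ ob2 ld sj] Bb2 Good by simp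
      finally show ?thesis using True by simp
    next
      case Bad
      have "pot s n B' L' b2 = 0"
      proof (cases "f \<le> load s n L' b2")
        case True
        then have "B' b2 = Inst c Good" using Bb2 Bad ff_fit.hyps(5) by simp
        then show ?thesis using True ff_fit.prems(1) by (simp add: pot_full)
      next
        case False
        then have "B' b2 = Inst c Bad" using Bb2 Bad ff_fit.hyps(5) by simp
        then show ?thesis by (simp add: pot_Bad)
      qed
      then show ?thesis using True pot_nonneg by simp
    qed
  next
    case False
    have "pot s n B' L' x = pot s n B L x"
      by (rule pot_cong) (use B'o[OF False] upd_other(1)[OF jn, of L x "Some b2" s] upd_other(2)[OF jn, of L x "Some b2"] Ljb xb False ff_fit.hyps(4) in auto)
    then show ?thesis by simp
  qed
  show ?case
  proof (intro conjI)
    show "\<forall>x. x \<noteq> b \<longrightarrow> pot s n B'' L'' x \<le> pot s n B L x"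
    proof (intro allI impI)
      fix x assume xb: "x \<noteq> b"
      have "pot s n B'' L'' x \<le> pot s n B' L' x" using IH xb by blast
      also have "\<dots> \<le> pot s n B L x" using step[OF xb] .
      finally show "pot s n B'' L'' x \<le> pot s n B L x" .
    qed
    show "binv s n B'' L''" using IH by simp
    show "\<forall>k. k \<notin> set (j # js) \<longrightarrow> L'' k = L k" using IH L'o by auto
    show "\<forall>k\<in>set (j # js). L'' k \<noteq> Some b" using IH jnot ff_fit.hyps(4) b2b by auto
    show "\<forall>x. B x = Junk \<longrightarrow> B'' x = Junk"
    proof (intro allI impI)
      fix x assume xj: "B x = Junk"
      then have "x \<noteq> b2" using Bb2 by auto
      then have "B' x = Junk" using B'o xj by simp
      then show "B'' x = Junk" using IH by blast
    qed
    show "B'' b = B b" using IH B'o[OF b2b[symmetric]] by simp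
  qed
next
  case (ff_new ord L j B b2 L' B' js B'' L'')
  have jn: "j < n" and Ljb: "L j = Some b" using ff_new.prems ff_new.hyps unfolding binv_def by auto
  obtain lb where Bb: "B b = Inst c lb" using ff_new.prems by auto
  have b2b: "b2 \<noteq> b" using Bb ff_new.hyps(2) by auto
  have cj: "item_class (s j) c" using ff_new.prems(7) Ljb Bb unfolding binv_def by auto
  have jnot: "j \<notin> set js" using ff_new.prems(4) by simp
  have nob2: "\<not> isopen n L b2" using ff_new.prems(7) ff_new.hyps(2) unfolding binv_def isopen_def by auto
  have B'b2: "\<exists>l. B' b2 = Inst c l" using ff_new.hyps(4) by auto
  have B'o: "\<And>x. x \<noteq> b2 \<Longrightarrow> B' x = B x" using ff_new.hyps(4) by auto
  have L'o: "\<And>k. k \<noteq> j \<Longrightarrow> L' k = L k" using ff_new.hyps(3) by auto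
  have binv': "binv s n B' L'"
    unfolding binv_def
  proof (intro allI impI)
    fix k x assume a: "L' k = Some x"
    show "k < n \<and> B' x \<noteq> Unused \<and> (\<forall>c' l. B' x = Inst c' l \<longrightarrow> item_class (s k) c')"
    proof (cases "k = j")
      case True
      then have "x = b2" using a ff_new.hyps(3) by simp
      then show ?thesis using True jn B'b2 cj by auto
    next
      case False
      then have Lk: "L k = Some x" using a L'o by simp
      then have "x \<noteq> b2" using ff_new.prems(7) ff_new.hyps(2) unfolding binv_def by auto
      then show ?thesis using Lk ff_new.prems(7) B'o unfolding binv_def by auto
    qed
  qed
  have IH: "(\<forall>x. x \<noteq> b \<longrightarrow> pot s n B'' L'' x \<le> pot s n B' L' x) \<and> binv s n B'' L''
    \<and> (\<forall>j. j \<notin> set js \<longrightarrow> L'' j = L' j) \<and> (\<forall>j\<in>set js. L'' j \<noteq> Some b)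
    \<and> (\<forall>x. B' x = Junk \<longrightarrow> B'' x = Junk) \<and> B'' b = B' b"
  proof (rule ff_new.IH)
    show "f = fpar c" by fact
    show "b \<notin> set (ord @ [b2])" using ff_new.prems b2b by simp
    show "\<exists>l. B' b = Inst c l" using Bb B'o[OF b2b[symmetric]] by auto
    show "distinct js" using ff_new.prems by simp
    show "\<forall>j\<in>set js. L' j = Some b"
    proof
      fix j' assume jj: "j' \<in> set js"
      then have "j' \<noteq> j" using jnot by auto
      then show "L' j' = Some b" using L'o ff_new.prems(5) jj by simp
    qed
    show "binv s n B' L'" by fact
    show "\<forall>x\<in>set (ord @ [b2]). isopen n L' x \<and> (\<exists>l. B' x = Inst c l)"
    proof
      fix x assume xo: "x \<in> set (ord @ [b2])"
      show "isopen n L' x \<and> (\<exists>l. B' x = Inst c l)"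
      proof (cases "x = b2")
        case True
        then show ?thesis using B'b2 jn ff_new.hyps(3) unfolding isopen_def by auto
      next
        case False
        then have xo': "x \<in> set ord" using xo by simp
        then have xb: "x \<noteq> b" using ff_new.prems by auto
        have "isopen n L' x" using upd_other(2)[OF jn, of L x "Some b2"] xo' ff_new.prems(6) Ljb xb
          ff_new.hyps(3) False by auto
        then show ?thesis using xo' ff_new.prems(6) B'o False by auto
      qed
    qed
  qed
  have step: "pot s n B' L' x \<le> pot s n B L x" if xb: "x \<noteq> b" for x
  proof (cases "x = b2")
    case True
    have ld: "load s n L' b2 = s j"
      using load_upd[OF jn, of s L "Some b2" b2] Ljb b2b ff_new.hyps(3) load_closed[OF nob2] by simp
    have "pot s n B' L' b2 = 0"
    proof (cases "f \<le> s j")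
      case True
      then have "B' b2 = Inst c Good" using ff_new.hyps(4) by simp
      then show ?thesis using True ld ff_new.prems(1) by (simp add: pot_full)
    next
      case False
      then have "B' b2 = Inst c Bad" using ff_new.hyps(4) by simp
      then show ?thesis by (simp add: pot_Bad)
    qed
    then show ?thesis using True pot_nonneg by simp
  next
    case False
    have "pot s n B' L' x = pot s n B L x"
      by (rule pot_cong) (use B'o[OF False] upd_other(1)[OF jn, of L x "Some b2" s] upd_other(2)[OF jn, of L x "Some b2"] Ljb xb False ff_new.hyps(3) in auto)
    then show ?thesis by simp
  qed
  show ?case
  proof (intro conjI)
    show "\<forall>x. x \<noteq> b \<longrightarrow> pot s n B'' L'' x \<le> pot s n B L x"
    proof (intro allI impI)
      fix x assume xb: "x \<noteq> b"
      have "pot s n B'' L'' x \<le> pot s n B' L' x" using IH xb by blast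
      also have "\<dots> \<le> pot s n B L x" using step[OF xb] .
      finally show "pot s n B'' L'' x \<le> pot s n B L x" .
    qed
    show "binv s n B'' L''" using IH by simp
    show "\<forall>k. k \<notin> set (j # js) \<longrightarrow> L'' k = L k" using IH L'o by auto
    show "\<forall>k\<in>set (j # js). L'' k \<noteq> Some b" using IH jnot ff_new.hyps(3) b2b by auto
    show "\<forall>x. B x = Junk \<longrightarrow> B'' x = Junk"
    proof (intro allI impI)
      fix x assume xj: "B x = Junk"
      then have "x \<noteq> b2" using ff_new.hyps(2) by auto
      then have "B' x = Junk" using B'o xj by simp
      then show "B'' x = Junk" using IH by blast
    qed
    show "B'' b = B b" using IH B'o[OF b2b[symmetric]] by simp
  qed
qed


lemma Phi_mono: "\<forall>x. pot s n B' L' x \<le> pot s n B L x \<Longrightarrow> Phi s n B' L' \<le> Phi s n B L"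
proof -
  assume a: "\<forall>x. pot s n B' L' x \<le> pot s n B L x"
  then have "Phi s n B' L' - pot s n B' L' 0 \<le> Phi s n B L - pot s n B L 0"
    by (intro phi_cmp) auto
  moreover have "pot s n B' L' 0 \<le> pot s n B L 0" using a by auto
  ultimately show ?thesis by linarith
qed

lemma inv_put:
  assumes "binv s n B L" "i < n" "B' b = Inst c l'" "item_class (s i) c"
    "\<forall>x. x \<noteq> b \<longrightarrow> B' x = B x" "B b = Unused \<or> (\<exists>l. B b = Inst c l)"
  shows "binv s n B' (L(i := Some b))"
  unfolding binv_def
proof (intro allI impI)
  fix k x assume a: "(L(i := Some b)) k = Some x"
  show "k < n \<and> B' x \<noteq> Unused \<and> (\<forall>c' l. B' x = Inst c' l \<longrightarrow> item_class (s k) c')"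
  proof (cases "k = i")
    case True
    then show ?thesis using a assms by auto
  next
    case False
    then have Lk: "L k = Some x" using a by simp
    show ?thesis
    proof (cases "x = b")
      case True
      then show ?thesis using Lk assms unfolding binv_def by fastforce
    next
      case False
      then show ?thesis using Lk assms unfolding binv_def by auto
    qed
  qed
qed

lemma arr_pot:
  assumes "L i = None" "i < n" "\<forall>x. x \<noteq> b \<longrightarrow> B' x = B x"
    "pot s n B' (L(i := Some b)) b \<le> pot s n B L b"
  shows "\<forall>x. pot s n B' (L(i := Some b)) x \<le> pot s n B L x"
proof
  fix x
  show "pot s n B' (L(i := Some b)) x \<le> pot s n B L x"
  proof (cases "x = b")
    case False
    have "pot s n B' (L(i := Some b)) x = pot s n B L x"
      by (rule pot_cong) (use assms False upd_other(1)[OF assms(2), of L x "Some b" s]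
          upd_other(2)[OF assms(2), of L x "Some b"] in auto)
    then show ?thesis by simp
  qed (use assms in simp)
qed

lemma arrive_lemma:
  assumes "alg1_arrive (fpar c) c s n B L i B' L'" "binv s n B L" "L i = None" "i < n"
    "item_class (s i) c" "B jb = Junk"
  shows "binv s n B' L' \<and> Phi s n B' L' \<le> Phi s n B L \<and> B' jb = Junk"
  using assms(1)
proof cases
  case (to_bad b)
  have ld: "load s n L' b = load s n L b + s i"
    using load_upd[OF assms(4), of s L "Some b" b] assms(3) to_bad by simp
  have p: "pot s n B' L' b = 0"
  proof (cases "fpar c \<le> load s n L' b")
    case True
    then have "B' b = Inst c Good" using to_bad by simp
    then show ?thesis using True by (simp add: pot_full)
  next
    case False
    then have "B' b = Inst c Bad" using to_bad by simp
    then show ?thesis by (simp add: pot_Bad)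
  qed
  have o: "\<forall>x. x \<noteq> b \<longrightarrow> B' x = B x" using to_bad by simp
  have "B' b = Inst c (if fpar c \<le> load s n L' b then Good else Bad)" using to_bad by simp
  note bb = this
  have "binv s n B' L'" unfolding to_bad(2) by (rule inv_put[OF assms(2,4) bb assms(5) o]) (use to_bad in simp)
  moreover have "Phi s n B' L' \<le> Phi s n B L"
    using Phi_mono[OF arr_pot[where L=L and i=i and b=b and B'=B' and B=B and n=n and s=s, OF assms(3,4) o]] p pot_nonneg to_bad by simp
  moreover have "B' jb = Junk"
  proof -
    have "jb \<noteq> b" using to_bad assms(6) by auto
    then show ?thesis using o assms(6) by simp
  qed
  ultimately show ?thesis by simp
next
  case (to_good b)
  have ld: "load s n L' b = load s n L b + s i"
    using load_upd[OF assms(4), of s L "Some b" b] assms(3) to_good by simp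
  have p: "pot s n B' L' b \<le> pot s n B L b"
    using pot_add_Good[OF _ _ ld] to_good class_facts[OF assms(5)] by simp
  have o: "\<forall>x. x \<noteq> b \<longrightarrow> B' x = B x" using to_good by simp
  have "binv s n B' L'" using inv_put[OF assms(2,4) _ assms(5) o, of Good] to_good by simp
  moreover have "Phi s n B' L' \<le> Phi s n B L"
    using Phi_mono[OF arr_pot[where L=L and i=i and b=b and B'=B' and B=B and n=n and s=s, OF assms(3,4) o]] p to_good by simp
  moreover have "B' jb = Junk" using to_good assms(6) by simp
  ultimately show ?thesis by simp
next
  case (to_new b)
  have nob: "\<not> isopen n L b" using assms(2) to_new unfolding binv_def isopen_def by auto
  have ld: "load s n L' b = s i"
    using load_upd[OF assms(4), of s L "Some b" b] assms(3) to_new load_closed[OF nob] by simp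
  have p: "pot s n B' L' b = 0"
  proof (cases "fpar c \<le> s i")
    case True
    then have "B' b = Inst c Good" using to_new by simp
    then show ?thesis using True ld by (simp add: pot_full)
  next
    case False
    then have "B' b = Inst c Bad" using to_new by simp
    then show ?thesis by (simp add: pot_Bad)
  qed
  have o: "\<forall>x. x \<noteq> b \<longrightarrow> B' x = B x" using to_new by simp
  have "B' b = Inst c (if fpar c \<le> s i then Good else Bad)" using to_new by simp
  note bb = this
  have "binv s n B' L'" unfolding to_new(2) by (rule inv_put[OF assms(2,4) bb assms(5) o]) (use to_new in simp)
  moreover have "Phi s n B' L' \<le> Phi s n B L"
    using Phi_mono[OF arr_pot[where L=L and i=i and b=b and B'=B' and B=B and n=n and s=s, OF assms(3,4) o]] p pot_nonneg to_new by simp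
  moreover have "B' jb = Junk"
  proof -
    have "jb \<noteq> b" using to_new assms(6) by auto
    then show ?thesis using o assms(6) by simp
  qed
  ultimately show ?thesis by simp
qed

lemma K_eq: "0 < \<alpha> \<Longrightarrow> \<alpha> < 1/2 \<Longrightarrow> 4 * \<alpha> / (1 - 2 * \<alpha>) * (1/2 - \<alpha>) = 2 * (\<alpha>::real)"
  by (simp add: field_simps)

lemma load_js:
  assumes "distinct js" "set js = {j. j < n \<and> L j = Some b}" "\<forall>j\<in>set js. item_class (s j) c"
  shows "real (length js) \<le> 2 ^ Suc c * load s n L b"
proof -
  have "load s n L b = (\<Sum>j\<in>set js. s j)" unfolding load_def using assms(2) by simp
  also have "\<dots> \<ge> (\<Sum>j\<in>set js. 1 / 2 ^ Suc c)"
    by (rule sum_mono, rule less_imp_le) (use assms(3) class_facts in blast)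
  finally have "real (length js) / 2 ^ Suc c \<le> load s n L b"
    using distinct_card[OF assms(1)] by simp
  then show ?thesis by (simp add: field_simps)
qed

lemma max_aux: "a = b + t \<Longrightarrow> t \<le> 1 \<Longrightarrow> max 0 a \<le> max 0 b + (1::real)"
  by (simp add: max_def)

lemma depart_lemma:
  assumes "alg1_depart \<alpha> (fpar c) c s n B L i B' L' m" "binv s n B L" "L i = Some b" "B b = Inst c l"
    "B jb = Junk" "0 < \<alpha>" "\<alpha> < 1/2"
  shows "binv s n B' L' \<and> real m + 4 * \<alpha> / (1 - 2 * \<alpha>) * Phi s n B' L'
      \<le> 4 * \<alpha> / (1 - 2 * \<alpha>) * Phi s n B L + 4 * \<alpha> / (1 - 2 * \<alpha>) \<and> B' jb = Junk"
proof -
  define K where "K = 4 * \<alpha> / (1 - 2 * \<alpha>)"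
  have K0: "0 \<le> K" unfolding K_def using assms(6,7) by simp
  have ilt: "i < n" using assms(2,3) unfolding binv_def by auto
  have ci: "item_class (s i) c" using assms(2,3,4) unfolding binv_def by auto
  have P0: "(0::real) < 2^c" by simp
  have Psi: "2^c * s i \<le> 1" using class_facts[OF ci] by (simp add: field_simps)
  have ob: "isopen n L b" using assms(3) ilt unfolding isopen_def by auto
  have ldb: "load s n (L(i := None)) b = load s n L b - s i"
    using load_upd[OF ilt, of s L None b] assms(3) by simp
  have oth: "pot s n B (L(i := None)) x = pot s n B L x" if "x \<noteq> b" for x
    by (rule pot_cong) (use that assms(3) upd_other(1)[OF ilt, of L x None s]
        upd_other(2)[OF ilt, of L x None] in auto)
  have invL1: "binv s n B (L(i := None))" using assms(2) unfolding binv_def by auto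
  show ?thesis using assms(1)
  proof cases
    case (dep_plain b0)
    have b0: "b0 = b" using dep_plain assms(3) by simp
    have pb: "pot s n B (L(i := None)) b \<le> pot s n B L b + 1"
    proof (cases "l = Good")
      case True
      then have G: "B b = Inst c Good" using assms(4) by simp
      have e: "2^c * (fpar c - load s n (L(i := None)) b) = 2^c * (fpar c - load s n L b) + 2^c * s i"
        unfolding ldb by (simp add: algebra_simps)
      have "max 0 (2^c * (fpar c - load s n (L(i := None)) b)) \<le> max 0 (2^c * (fpar c - load s n L b)) + 1"
        using max_aux[OF e Psi] .
      then show ?thesis using G ob by (simp add: pot_Good)
    next
      case False
      then have "l = Bad" by (cases l) auto
      then have "pot s n B (L(i := None)) b = 0" using assms(4) pot_Bad by simp
      then show ?thesis using pot_nonneg[of s n B L b] by linarith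
    qed
    have "Phi s n B (L(i := None)) - pot s n B (L(i := None)) b \<le> Phi s n B L - pot s n B L b"
      by (rule phi_cmp) (use oth in simp)
    then have "Phi s n B (L(i := None)) \<le> Phi s n B L + 1" using pb by linarith
    then have "K * Phi s n B (L(i := None)) \<le> K * (Phi s n B L + 1)"
      using K0 by (rule mult_left_mono)
    then have "K * Phi s n B (L(i := None)) \<le> K * Phi s n B L + K"
      by (simp add: distrib_left)
    then show ?thesis using dep_plain invL1 assms(5) unfolding K_def by simp
  next
    case (dep_migrate b0 L1 bads goods js)
    note dm = dep_migrate
    have mjs: "m = length js" by (rule dm(1))
    have b0: "b0 = b" using dm(2) assms(3) by simp
    have L1: "L1 = L(i := None)" by (rule dm(3))
    have G: "B b = Inst c Good" using dm(4) b0 by simp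
    have l1a': "load s n L1 b < \<alpha>" using dm(5) b0 by simp
    have sb: "set bads = {b'. b' \<noteq> b \<and> isopen n L1 b' \<and> B b' = Inst c Bad}" using dm(7) b0 by simp
    have sg: "set goods = {b'. b' \<noteq> b \<and> isopen n L1 b' \<and> B b' = Inst c Good}" using dm(8) b0 by simp
    have djs: "distinct js" by (rule dm(9))
    have sjs: "set js = {j. j < n \<and> L1 j = Some b}" using dm(10) b0 by simp
    have ffr: "firstfit (fpar c) c s n (bads @ goods) js B L1 B' L'" by (rule dm(11))
    have ff: "(\<forall>x. x \<noteq> b \<longrightarrow> pot s n B' L' x \<le> pot s n B L1 x) \<and> binv s n B' L'
      \<and> (\<forall>j. j \<notin> set js \<longrightarrow> L' j = L1 j) \<and> (\<forall>j\<in>set js. L' j \<noteq> Some b)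
      \<and> (\<forall>x. B x = Junk \<longrightarrow> B' x = Junk) \<and> B' b = B b"
    proof (rule ff_lemma[OF ffr refl])
      show "b \<notin> set (bads @ goods)" unfolding set_append sb sg by blast
      show "\<exists>l. B b = Inst c l" using G by blast
      show "distinct js" by (rule djs)
      show "\<forall>j\<in>set js. L1 j = Some b" unfolding sjs by blast
      show "\<forall>x\<in>set (bads @ goods). isopen n L1 x \<and> (\<exists>l. B x = Inst c l)" unfolding set_append sb sg by blast
      show "binv s n B L1" using invL1 L1 by simp
    qed
    have ffp: "\<forall>x. x \<noteq> b \<longrightarrow> pot s n B' L' x \<le> pot s n B L1 x" using ff by (rule conjunct1)
    have ffi: "binv s n B' L'" using ff by (rule conjunct2[THEN conjunct1])
    have ffo: "\<forall>j. j \<notin> set js \<longrightarrow> L' j = L1 j" using ff by (rule conjunct2[THEN conjunct2[THEN conjunct1]])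
    have ffm: "\<forall>j\<in>set js. L' j \<noteq> Some b" using ff by (rule conjunct2[THEN conjunct2[THEN conjunct2[THEN conjunct1]]])
    have ffj: "\<forall>x. B x = Junk \<longrightarrow> B' x = Junk" using ff by (rule conjunct2[THEN conjunct2[THEN conjunct2[THEN conjunct2[THEN conjunct1]]]])
    have closed: "\<not> isopen n L' b"
    proof
      assume "isopen n L' b"
      then obtain k where k: "k < n" "L' k = Some b" unfolding isopen_def by blast
      show False
      proof (cases "k \<in> set js")
        case True then show False using ffm k by blast
      next
        case False
        then have "L1 k = Some b" using ffo k by simp
        then have "k \<in> set js" unfolding sjs using k by blast
        then show False using False by simp
      qed
    qed
    have "Phi s n B' L' - pot s n B' L' b \<le> Phi s n B L - pot s n B L b"
    proof (rule phi_cmp, intro allI impI)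
      fix x assume xb: "x \<noteq> b"
      have "pot s n B' L' x \<le> pot s n B L1 x" using ffp xb by blast
      also have "\<dots> = pot s n B L x" using oth[OF xb] L1 by simp
      finally show "pot s n B' L' x \<le> pot s n B L x" .
    qed
    then have Ph: "Phi s n B' L' \<le> Phi s n B L - pot s n B L b" using pot_closed[OF closed] by simp
    define l1 where "l1 = load s n L1 b"
    have l1a: "l1 < \<alpha>" using l1a' l1_def by simp
    have cjs: "\<forall>j\<in>set js. item_class (s j) c"
      using sjs invL1 L1 G unfolding binv_def by auto
    have m1: "real m \<le> 2 * 2^c * l1"
      using load_js[OF djs sjs cjs] mjs l1_def by simp
    have pb: "pot s n B L b \<ge> 2^c * (fpar c - l1 - s i)"
      using G ob ldb L1 l1_def by (simp add: pot_Good)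
    have "2^c * (1/2 - \<alpha>) \<le> 2^c * (fpar c - l1)"
      using fpar_ge[of c] l1a by (intro mult_left_mono) auto
    also have "\<dots> \<le> 1 + pot s n B L b" using pb Psi by (simp add: algebra_simps)
    finally have A: "2^c * (1/2 - \<alpha>) \<le> 1 + pot s n B L b" .
    have "2 * 2^c * l1 \<le> 2 * 2^c * \<alpha>" using l1a by (intro mult_left_mono) auto
    then have "real m \<le> 2 * 2^c * \<alpha>" using m1 by linarith
    also have "\<dots> = K * (2^c * (1/2 - \<alpha>))"
    proof -
      have kq: "K * (1/2 - \<alpha>) = 2 * \<alpha>" using K_eq[OF assms(6,7)] unfolding K_def .
      have "K * (2^c * (1/2 - \<alpha>)) = 2^c * (K * (1/2 - \<alpha>))" by (simp only: mult.left_commute)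
      then show ?thesis using kq by simp
    qed
    also have "\<dots> \<le> K * (1 + pot s n B L b)" using A K0 by (rule mult_left_mono)
    finally have M: "real m \<le> K * (1 + pot s n B L b)" .
    have "K * Phi s n B' L' \<le> K * (Phi s n B L - pot s n B L b)" using Ph K0 by (rule mult_left_mono)
    then have "real m + K * Phi s n B' L' \<le> K * Phi s n B L + K" using M by (simp add: algebra_simps)
    then show ?thesis using ffi ffj assms(5) mjs unfolding K_def by simp
  qed
qed


definition sinv :: "(nat \<Rightarrow> real) \<Rightarrow> nat \<Rightarrow> state \<Rightarrow> bool" where
  "sinv s n \<sigma> \<longleftrightarrow> binv s n (bins \<sigma>) (loc \<sigma>) \<and> bins \<sigma> (junkb \<sigma>) = Junk"

definition depc :: "event \<Rightarrow> real" where
  "depc e = (case e of Arr _ \<Rightarrow> 0 | Dep _ \<Rightarrow> 1)"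

lemma guess_lemma:
  assumes "guess_upd n \<sigma> \<sigma>1" "sinv s n \<sigma>"
  shows "sinv s n \<sigma>1 \<and> loc \<sigma>1 = loc \<sigma> \<and> migs \<sigma>1 = migs \<sigma>
    \<and> Phi s n (bins \<sigma>1) (loc \<sigma>1) = Phi s n (bins \<sigma>) (loc \<sigma>)"
  using assms(1)
proof cases
  case keep
  then show ?thesis using assms(2) by simp
next
  case (double jb)
  have U: "bins \<sigma> jb = Unused" using double by blast
  have inv1: "binv s n ((bins \<sigma>)(jb := Junk)) (loc \<sigma>)"
    using assms(2) U unfolding sinv_def binv_def by auto
  have pe: "pot s n ((bins \<sigma>)(jb := Junk)) (loc \<sigma>) x = pot s n (bins \<sigma>) (loc \<sigma>) x" for x
  proof (cases "x = jb")
    case True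
    then show ?thesis using U by (simp add: pot_Junk pot_Unused)
  next
    case False
    then show ?thesis by (intro pot_cong) simp_all
  qed
  have "Phi s n ((bins \<sigma>)(jb := Junk)) (loc \<sigma>) = Phi s n (bins \<sigma>) (loc \<sigma>)"
    unfolding Phi_def using pe by simp
  then show ?thesis using double(1) inv1 unfolding sinv_def by simp
qed

lemma step_lemma:
  assumes "alg2_step \<alpha> s n \<sigma> e \<sigma>'" "sinv s n \<sigma>" "0 < \<alpha>" "\<alpha> < 1/2"
  shows "sinv s n \<sigma>' \<and> real (migs \<sigma>') + 4 * \<alpha> / (1 - 2 * \<alpha>) * Phi s n (bins \<sigma>') (loc \<sigma>')
    \<le> real (migs \<sigma>) + 4 * \<alpha> / (1 - 2 * \<alpha>) * Phi s n (bins \<sigma>) (loc \<sigma>) + 4 * \<alpha> / (1 - 2 * \<alpha>) * depc e"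
proof -
  define K where "K = 4 * \<alpha> / (1 - 2 * \<alpha>)"
  have K0: "0 \<le> K" unfolding K_def using assms(3,4) by simp
  have "sinv s n \<sigma>' \<and> real (migs \<sigma>') + K * Phi s n (bins \<sigma>') (loc \<sigma>')
    \<le> real (migs \<sigma>) + K * Phi s n (bins \<sigma>) (loc \<sigma>) + K * depc e"
    using assms(1)
  proof cases
    case (arr_inst i \<sigma>1 c B' L')
    have g: "sinv s n \<sigma>1 \<and> loc \<sigma>1 = loc \<sigma> \<and> migs \<sigma>1 = migs \<sigma>
      \<and> Phi s n (bins \<sigma>1) (loc \<sigma>1) = Phi s n (bins \<sigma>) (loc \<sigma>)"
      by (rule guess_lemma[OF arr_inst(5) assms(2)])
    have a: "binv s n B' L' \<and> Phi s n B' L' \<le> Phi s n (bins \<sigma>1) (loc \<sigma>1) \<and> B' (junkb \<sigma>1) = Junk"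
    proof (rule arrive_lemma[OF arr_inst(8)])
      show "binv s n (bins \<sigma>1) (loc \<sigma>1)" using g unfolding sinv_def by blast
      show "loc \<sigma>1 i = None" using g arr_inst(4) by simp
      show "i < n" by (rule arr_inst(3))
      show "item_class (s i) c" by (rule arr_inst(6))
      show "bins \<sigma>1 (junkb \<sigma>1) = Junk" using g unfolding sinv_def by blast
    qed
    have "K * Phi s n B' L' \<le> K * Phi s n (bins \<sigma>1) (loc \<sigma>1)" using a K0 by (intro mult_left_mono) auto
    moreover have PhiEq: "Phi s n (bins \<sigma>1) (loc \<sigma>1) = Phi s n (bins \<sigma>) (loc \<sigma>)" using g by blast
    ultimately have KP: "K * Phi s n B' L' \<le> K * Phi s n (bins \<sigma>) (loc \<sigma>)" by simp
    have M: "migs \<sigma>1 = migs \<sigma>" using g by blast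
    show ?thesis using a KP M arr_inst(1,2) unfolding sinv_def depc_def by simp
  next
    case (arr_junk i \<sigma>1)
    have g: "sinv s n \<sigma>1 \<and> loc \<sigma>1 = loc \<sigma> \<and> migs \<sigma>1 = migs \<sigma>
      \<and> Phi s n (bins \<sigma>1) (loc \<sigma>1) = Phi s n (bins \<sigma>) (loc \<sigma>)"
      by (rule guess_lemma[OF arr_junk(5) assms(2)])
    define B where "B = bins \<sigma>1"
    define L where "L = loc \<sigma>1"
    define jb where "jb = junkb \<sigma>1"
    have J: "B jb = Junk" using g unfolding sinv_def B_def jb_def by blast
    have iv: "binv s n B L" using g unfolding sinv_def B_def L_def by blast
    have Li: "L i = None" using g arr_junk(4) L_def by simp
    have "\<forall>x. pot s n B (L(i := Some jb)) x \<le> pot s n B L x"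
      by (rule arr_pot[where L=L and i=i and n=n and b=jb and B'=B and B=B and s=s, OF Li arr_junk(3)]) (use J pot_Junk in simp_all)
    then have P: "Phi s n B (L(i := Some jb)) \<le> Phi s n B L" by (rule Phi_mono)
    have iv': "binv s n B (L(i := Some jb))"
      using iv J arr_junk(3) unfolding binv_def by auto
    have "K * Phi s n B (L(i := Some jb)) \<le> K * Phi s n B L" using P K0 by (rule mult_left_mono)
    moreover have PhiEq: "Phi s n B L = Phi s n (bins \<sigma>) (loc \<sigma>)" using g unfolding B_def L_def by blast
    ultimately have KP: "K * Phi s n B (L(i := Some jb)) \<le> K * Phi s n (bins \<sigma>) (loc \<sigma>)" by simp
    have M: "migs \<sigma>1 = migs \<sigma>" using g by blast
    show ?thesis using iv' J KP M arr_junk(1,2) unfolding sinv_def depc_def B_def L_def jb_def by simp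
  next
    case (dep_inst i b c l B' L' m)
    have d: "binv s n B' L' \<and> real m + K * Phi s n B' L' \<le> K * Phi s n (bins \<sigma>) (loc \<sigma>) + K
      \<and> B' (junkb \<sigma>) = Junk"
      unfolding K_def
      by (rule depart_lemma[OF dep_inst(5) _ dep_inst(3,4) _ assms(3,4)]) (use assms(2) in \<open>simp_all add: sinv_def\<close>)
    then show ?thesis using dep_inst(1,2) unfolding sinv_def depc_def by simp
  next
    case (dep_junk i b)
    define B where "B = bins \<sigma>"
    define L where "L = loc \<sigma>"
    have iv: "binv s n B L" using assms(2) unfolding sinv_def B_def L_def by simp
    have J: "B b = Junk" using dep_junk(4) B_def by simp
    have Li: "L i = Some b" using dep_junk(3) L_def by simp
    have ilt: "i < n" using iv Li unfolding binv_def by auto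
    have pe: "pot s n B (L(i := None)) x \<le> pot s n B L x" for x
    proof (cases "x = b")
      case True
      then show ?thesis using J by (simp add: pot_Junk)
    next
      case False
      have "pot s n B (L(i := None)) x = pot s n B L x"
        by (rule pot_cong) (use False Li upd_other(1)[OF ilt, of L x None s] upd_other(2)[OF ilt, of L x None] in auto)
      then show ?thesis by simp
    qed
    then have P: "Phi s n B (L(i := None)) \<le> Phi s n B L" by (intro Phi_mono) auto
    have iv': "binv s n B (L(i := None))" using iv unfolding binv_def by auto
    have "K * Phi s n B (L(i := None)) \<le> K * Phi s n B L" using P K0 by (rule mult_left_mono)
    then show ?thesis using iv' K0 assms(2) dep_junk(1,2) unfolding sinv_def depc_def B_def L_def by simp
  qed
  then show ?thesis unfolding K_def .
qed

lemma run_lemma: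
  assumes "alg2_run \<alpha> s n \<sigma> es \<sigma>'" "sinv s n \<sigma>" "0 < \<alpha>" "\<alpha> < 1/2"
  shows "real (migs \<sigma>') + 4 * \<alpha> / (1 - 2 * \<alpha>) * Phi s n (bins \<sigma>') (loc \<sigma>')
    \<le> real (migs \<sigma>) + 4 * \<alpha> / (1 - 2 * \<alpha>) * Phi s n (bins \<sigma>) (loc \<sigma>)
       + 4 * \<alpha> / (1 - 2 * \<alpha>) * (\<Sum>e\<leftarrow>es. depc e)"
  using assms(1,2)
proof (induction rule: alg2_run.induct)
  case (run_nil \<sigma>)
  then show ?case by simp
next
  case (run_cons \<sigma> e \<sigma>1 es \<sigma>2)
  have st: "sinv s n \<sigma>1 \<and> real (migs \<sigma>1) + 4 * \<alpha> / (1 - 2 * \<alpha>) * Phi s n (bins \<sigma>1) (loc \<sigma>1)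
    \<le> real (migs \<sigma>) + 4 * \<alpha> / (1 - 2 * \<alpha>) * Phi s n (bins \<sigma>) (loc \<sigma>) + 4 * \<alpha> / (1 - 2 * \<alpha>) * depc e"
    by (rule step_lemma[OF run_cons(1) run_cons(4) assms(3,4)])
  then have "real (migs \<sigma>2) + 4 * \<alpha> / (1 - 2 * \<alpha>) * Phi s n (bins \<sigma>2) (loc \<sigma>2)
    \<le> real (migs \<sigma>1) + 4 * \<alpha> / (1 - 2 * \<alpha>) * Phi s n (bins \<sigma>1) (loc \<sigma>1)
       + 4 * \<alpha> / (1 - 2 * \<alpha>) * (\<Sum>e\<leftarrow>es. depc e)" using run_cons(3) by simp
  then show ?case using st by (simp add: distrib_left)
qed

lemma depc_sum:
  assumes "distinct evs" "set evs \<subseteq> Arr ` {..<n} \<union> Dep ` {..<n}"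
  shows "(\<Sum>e\<leftarrow>evs. depc e) \<le> real n"
proof -
  have "(\<Sum>e\<leftarrow>evs. depc e) = (\<Sum>e\<in>set evs. depc e)" using assms(1) by (simp add: sum_list_distinct_conv_sum_set)
  also have "\<dots> = (\<Sum>e\<in>set evs \<inter> Dep ` {..<n}. depc e)"
  proof (rule sum.mono_neutral_right)
    show "\<forall>e\<in>set evs - set evs \<inter> Dep ` {..<n}. depc e = 0" using assms(2) by (auto simp: depc_def)
  qed auto
  also have "\<dots> = (\<Sum>e\<in>set evs \<inter> Dep ` {..<n}. 1)" by (rule sum.cong) (auto simp: depc_def)
  also have "\<dots> = real (card (set evs \<inter> Dep ` {..<n}))" by simp
  also have "\<dots> \<le> real (card (Dep ` {..<n}))" by (simp add: card_mono)
  also have "\<dots> \<le> real n" using card_image_le[of "{..<n}" Dep] by simp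
  finally show ?thesis .
qed

theorem lemma13:
  fixes \<alpha> :: real and n :: nat and a s d :: "nat \<Rightarrow> real"
    and evs :: "event list" and \<sigma> :: state
  assumes "0 < \<alpha>" and "\<alpha> < 1/2"
    and "\<forall>i<n. 0 \<le> a i \<and> 0 \<le> s i \<and> s i \<le> 1 \<and> 0 < d i"
    and "valid_order n a d evs"
    and "alg2_run \<alpha> s n alg2_init evs \<sigma>"
  shows "real (migs \<sigma>) \<le> 4 * \<alpha> / (1 - 2 * \<alpha>) * real n"
proof -
  define K where "K = 4 * \<alpha> / (1 - 2 * \<alpha>)"
  have K0: "0 \<le> K" unfolding K_def using assms(1,2) by simp
  have si: "sinv s n alg2_init" unfolding sinv_def binv_def alg2_init_def by simp
  have P0: "Phi s n (bins alg2_init) (loc alg2_init) = 0"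
    unfolding Phi_def alg2_init_def isopen_def by simp
  have r: "real (migs \<sigma>) + K * Phi s n (bins \<sigma>) (loc \<sigma>) \<le> K * (\<Sum>e\<leftarrow>evs. depc e)"
    using run_lemma[OF assms(5) si assms(1,2)] P0 unfolding K_def by (simp add: alg2_init_def)
  have "(\<Sum>e\<leftarrow>evs. depc e) \<le> real n" using assms(4) unfolding valid_order_def by (intro depc_sum) auto
  then have "K * (\<Sum>e\<leftarrow>evs. depc e) \<le> K * real n" using K0 by (rule mult_left_mono)
  moreover have "0 \<le> K * Phi s n (bins \<sigma>) (loc \<sigma>)" using K0 Phi_nonneg by simp
  ultimately show ?thesis using r unfolding K_def by linarith
qed


end
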